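(* Let $N\ge1$ and $1\le\sigma_N\le CN^{1/2}$. Define $c_d=Z_N^{-1}e^{-d^2/4\sigma_N^2}$ if $N+d$ is even and $|d|\le\sigma_N^2$, and $c_d=0$ otherwise, with $Z_N>0$ such that $\sum_{|d|\le\sigma_N^2}|c_d|^2=1$. Then: (1) for every $n\in\mathbb N$ there is $C_n$ independent of $N$ and $\sigma_N$ with $\sum_{-\sigma_N^2\le d\le\sigma_N^2}d^{2n}|c_d|^2\le C_n\sigma_N^{2n}$, and $\sum_{-\sigma_N^2\le d\le\sigma_N^2}d^{2n+1}|c_d|^2=0$; (2) for every even integer $\kappa\in2\mathbb Z$ there is $C$ (depending on $\kappa$, not on $N,\sigma_N$) with $\Big|\sum_{-\sigma_N^2\le d\le\sigma_N^2-\kappa}c_dc_{d+\kappa}-1\Big|\le\frac{C}{\sigma_N^2}$.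
   Context: Here $d$ ranges over integers. *)

theory Defs
  imports Complex_Main
begin

definition gauss_weight :: "nat \<Rightarrow> real \<Rightarrow> int \<Rightarrow> real" where
  "gauss_weight N \<sigma> d =
     (if even (int N + d) \<and> real_of_int \<bar>d\<bar> \<le> \<sigma>\<^sup>2
      then exp (- (real_of_int d)\<^sup>2 / (4 * \<sigma>\<^sup>2)) else 0)"

definition norm_const :: "nat \<Rightarrow> real \<Rightarrow> real" where
  "norm_const N \<sigma> =
     sqrt (\<Sum>d\<in>{d::int. real_of_int \<bar>d\<bar> \<le> \<sigma>\<^sup>2}. (gauss_weight N \<sigma> d)\<^sup>2)"

definition coef :: "nat \<Rightarrow> real \<Rightarrow> int \<Rightarrow> real" where
  "coef N \<sigma> d = gauss_weight N \<sigma> d / norm_const N \<sigma>"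

end

theory Submission
  imports Defs
begin

lemma fin_abs_le: "finite {d::int. real_of_int \<bar>d\<bar> \<le> R}"
proof -
  have "{d::int. real_of_int \<bar>d\<bar> \<le> R} \<subseteq> {-\<lceil>R\<rceil>..\<lceil>R\<rceil>}"
  proof
    fix d :: int assume "d \<in> {d::int. real_of_int \<bar>d\<bar> \<le> R}"
    then have h: "real_of_int \<bar>d\<bar> \<le> R" by simp
    have "\<bar>d\<bar> \<le> \<lceil>R\<rceil>" using h by (meson ceiling_mono ceiling_of_int order.trans order_refl le_of_int_ceiling of_int_le_iff)
    then show "d \<in> {-\<lceil>R\<rceil>..\<lceil>R\<rceil>}" by auto
  qed
  then show ?thesis by (rule finite_subset) simp
qed

lemma sym_sum_le:
  fixes g :: "nat \<Rightarrow> real"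
  assumes "\<And>k. g k \<ge> 0"
  shows "(\<Sum>d\<in>{-int m..int m}. g (nat \<bar>d\<bar>)) \<le> 2 * (\<Sum>k<Suc m. g k)"
proof (induction m)
  case 0
  then show ?case using assms[of 0] by simp
next
  case (Suc m)
  have e: "{-int (Suc m)..int (Suc m)} = insert (int (Suc m)) (insert (- int (Suc m)) {-int m..int m})"
    by auto
  have "(\<Sum>d\<in>{-int (Suc m)..int (Suc m)}. g (nat \<bar>d\<bar>)) = g (Suc m) + g (Suc m) + (\<Sum>d\<in>{-int m..int m}. g (nat \<bar>d\<bar>))"
    unfolding e by (simp add: nat_int nat_add_distrib)
  also have "\<dots> \<le> 2 * (\<Sum>k<Suc (Suc m). g k)" using Suc by simp
  finally show ?case .
qed

lemma geom_le:
  fixes q :: real assumes "0 \<le> q" "q < 1"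
  shows "(\<Sum>k<n. q ^ k) \<le> 1 / (1 - q)"
proof -
  have "(\<Sum>k<n. q ^ k) = (1 - q^n) / (1 - q)" using assms by (simp add: sum_gp_strict)
  also have "\<dots> \<le> 1 / (1 - q)" using assms by (intro divide_right_mono) auto
  finally show ?thesis .
qed

lemma inv_one_minus_exp: fixes a :: real assumes "a > 0" shows "1 / (1 - exp (-a)) \<le> 1 + 1 / a"
proof -
  have "1 + a \<le> exp a" by simp
  then have "exp (-a) * (1 + a) \<le> 1" by (simp add: exp_minus field_simps)
  then have "exp (-a) \<le> 1 / (1 + a)" using assms by (simp add: field_simps)
  then have "1 - exp (-a) \<ge> a / (1 + a)" using assms by (simp add: field_simps)
  moreover have h: "a / (1+a) > 0" using assms by simp
  ultimately have p: "1 - exp (-a) > 0" by linarith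
  have "1 / (1 - exp (-a)) \<le> 1 / (a / (1 + a))"
    by (rule divide_left_mono[OF _ _ mult_pos_pos[OF p h]]) (use \<open>1 - exp (-a) \<ge> a / (1 + a)\<close> in auto)
  also have "\<dots> = 1 + 1/a" using assms by (simp add: field_simps)
  finally show ?thesis .
qed

lemma geom_bound:
  assumes "finite S" "a > 0"
  shows "(\<Sum>d\<in>S. exp (- a * real_of_int \<bar>d\<bar>)) \<le> 2 * (1 + 1/a)"
proof -
  obtain m :: nat where m: "S \<subseteq> {-int m..int m}"
  proof -
    obtain M where "\<forall>d\<in>S. \<bar>d\<bar> \<le> M" using assms(1) finite_abs_int_segment
      by (metis Max_ge finite_imageI image_eqI)
    then show ?thesis by (intro that[of "nat M"]) force
  qed
  define q where "q = exp (-a)"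
  have q: "0 \<le> q" "q < 1" using assms by (auto simp: q_def)
  have gk: "exp (- a * real_of_int \<bar>d\<bar>) = q ^ (nat \<bar>d\<bar>)" for d
  proof -
    have "- a * real_of_int \<bar>d\<bar> = real (nat \<bar>d\<bar>) * (-a)" by simp
    then show ?thesis unfolding q_def by (simp only: exp_of_nat_mult)
  qed
  have "(\<Sum>d\<in>S. exp (- a * real_of_int \<bar>d\<bar>)) \<le> (\<Sum>d\<in>{-int m..int m}. exp (- a * real_of_int \<bar>d\<bar>))"
    by (intro sum_mono2 m) auto
  also have "\<dots> = (\<Sum>d\<in>{-int m..int m}. (\<lambda>k. q ^ k) (nat \<bar>d\<bar>))" by (simp only: gk)
  also have "\<dots> \<le> 2 * (\<Sum>k<Suc m. q ^ k)" by (rule sym_sum_le) (simp add: q)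
  also have "\<dots> \<le> 2 * (1 / (1 - q))" using geom_le[OF q, of "Suc m"] by linarith
  also have "\<dots> \<le> 2 * (1 + 1/a)" using inv_one_minus_exp[OF assms(2)] by (simp add: q_def)
  finally show ?thesis .
qed


definition gs :: "real \<Rightarrow> real \<Rightarrow> real" where
  "gs \<sigma> x = exp (- x\<^sup>2 / (4 * \<sigma>\<^sup>2))"

lemma gs_pos: "gs \<sigma> x > 0" by (simp add: gs_def)

lemma gs_sq: "(gs \<sigma> x)\<^sup>2 = exp (- x\<^sup>2 / (2 * \<sigma>\<^sup>2))"
  unfolding gs_def power2_eq_square exp_add[symmetric] by (simp add: field_simps)

lemma gauss_exp_bound:
  assumes "\<sigma> > 0"
  shows "gs \<sigma> x \<le> exp (1/16) * exp (- \<bar>x\<bar> / (4 * \<sigma>))"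
proof -
  define u where "u = \<bar>x\<bar> / \<sigma>"
  have "0 \<le> (u/2 - 1/4)\<^sup>2" by simp
  then have "- u\<^sup>2/4 \<le> 1/16 - u/4" by (simp add: power2_eq_square algebra_simps)
  moreover have "u\<^sup>2 = x\<^sup>2 / \<sigma>\<^sup>2" unfolding u_def by (simp add: power_divide)
  moreover have "u / 4 = \<bar>x\<bar> / (4 * \<sigma>)" unfolding u_def by simp
  ultimately have "- x\<^sup>2 / (4 * \<sigma>\<^sup>2) \<le> 1/16 + (- \<bar>x\<bar> / (4 * \<sigma>))" by simp
  then show ?thesis unfolding gs_def exp_add[symmetric] by simp
qed

lemma poly_exp_bound:
  fixes y :: real assumes "y \<ge> 0"
  shows "y ^ n \<le> real n ^ n * exp y"
proof (cases "n = 0")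
  case True then show ?thesis using assms by simp
next
  case False
  then have np: "real n > 0" by simp
  have "y / n \<le> exp (y / n)" using exp_ge_add_one_self[of "y/n"] by linarith
  then have "(y / n) ^ n \<le> exp (y / n) ^ n" using assms np by (intro power_mono) auto
  also have "exp (y / n) ^ n = exp y" using np by (simp add: exp_of_nat_mult[symmetric])
  finally have "y ^ n / real n ^ n \<le> exp y" by (simp add: power_divide)
  then show ?thesis using np by (simp add: field_simps)
qed

lemma moment_pt:
  assumes "\<sigma> > 0"
  shows "x ^ (2*n) * gs \<sigma> x \<le> (4 * real n) ^ n * \<sigma> ^ (2*n)"
proof -
  define y where "y = x\<^sup>2 / (4 * \<sigma>\<^sup>2)"
  have y0: "y \<ge> 0" unfolding y_def by simp
  have x2: "x\<^sup>2 = 4 * \<sigma>\<^sup>2 * y" unfolding y_def using assms by simp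
  have xe: "x ^ (2*n) = (4 * \<sigma>\<^sup>2) ^ n * y ^ n"
    by (simp only: power_mult x2 power_mult_distrib)
  have g: "gs \<sigma> x = exp (- y)" unfolding gs_def y_def by simp
  have "y ^ n * exp (- y) \<le> real n ^ n"
    using poly_exp_bound[OF y0, of n] by (simp add: exp_minus field_simps)
  then have "(4 * \<sigma>\<^sup>2) ^ n * (y ^ n * exp (- y)) \<le> (4 * \<sigma>\<^sup>2) ^ n * real n ^ n"
    by (intro mult_left_mono) auto
  then show ?thesis unfolding xe g
    by (simp add: power_mult_distrib power_mult[symmetric] mult.assoc mult.left_commute) (metis mult.commute)
qed

lemma gs_deriv: assumes "\<sigma> \<noteq> 0" shows "DERIV (gs \<sigma>) x :> gs \<sigma> x * (- (2 * x) / (4 * \<sigma>\<^sup>2))"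
  unfolding gs_def[abs_def]
  using assms by (auto intro!: derivative_eq_intros simp: field_simps power2_eq_square)

lemma mvt_bound:
  assumes "\<sigma> > 0"
  shows "(gs \<sigma> a - gs \<sigma> b)\<^sup>2 \<le> (a - b)\<^sup>2 / \<sigma>\<^sup>2 * exp (1/16) * exp (- (\<bar>a\<bar> - \<bar>a - b\<bar>) / (4 * \<sigma>))"
proof -
  have sne: "\<sigma> \<noteq> 0" using assms by simp
  have "\<exists>z. \<bar>z - a\<bar> \<le> \<bar>a - b\<bar> \<and> gs \<sigma> b - gs \<sigma> a = (b - a) * (gs \<sigma> z * (- (2 * z) / (4 * \<sigma>\<^sup>2)))"
  proof (cases a b rule: linorder_cases)
    case less
    from MVT2[OF less gs_deriv[OF sne]] obtain z where "a < z" "z < b"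
      "gs \<sigma> b - gs \<sigma> a = (b - a) * (gs \<sigma> z * (- (2 * z) / (4 * \<sigma>\<^sup>2)))" by blast
    then show ?thesis by (intro exI[of _ z]) auto
  next
    case equal then show ?thesis by (intro exI[of _ a]) auto
  next
    case greater
    from MVT2[OF greater gs_deriv[OF sne]] obtain z where "b < z" "z < a"
      "gs \<sigma> a - gs \<sigma> b = (a - b) * (gs \<sigma> z * (- (2 * z) / (4 * \<sigma>\<^sup>2)))" by blast
    note eq = this(3)
    have "gs \<sigma> b - gs \<sigma> a = - (gs \<sigma> a - gs \<sigma> b)" by simp
    also have "\<dots> = - ((a - b) * (gs \<sigma> z * (- (2 * z) / (4 * \<sigma>\<^sup>2))))" by (simp only: eq)
    also have "\<dots> = (b - a) * (gs \<sigma> z * (- (2 * z) / (4 * \<sigma>\<^sup>2)))" by (simp only: minus_mult_left minus_diff_eq)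
    finally have "gs \<sigma> b - gs \<sigma> a = (b - a) * (gs \<sigma> z * (- (2 * z) / (4 * \<sigma>\<^sup>2)))" .
    then show ?thesis using \<open>b < z\<close> \<open>z < a\<close> by (intro exI[of _ z]) auto
  qed
  then obtain z where z: "\<bar>z - a\<bar> \<le> \<bar>a - b\<bar>"
    and e: "gs \<sigma> b - gs \<sigma> a = (b - a) * (gs \<sigma> z * (- (2 * z) / (4 * \<sigma>\<^sup>2)))" by blast
  define g where "g = gs \<sigma> z"
  define X where "X = g * (- (2 * z) / (4 * \<sigma>\<^sup>2))"
  have g0: "g > 0" unfolding g_def by (rule gs_pos)
  have "gs \<sigma> a - gs \<sigma> b = - (gs \<sigma> b - gs \<sigma> a)" by simp
  also have "\<dots> = - ((b - a) * X)" unfolding X_def g_def by (simp only: e)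
  also have "\<dots> = (a - b) * X" by (simp only: minus_mult_left minus_diff_eq)
  finally have D: "gs \<sigma> a - gs \<sigma> b = (a - b) * X" .
  have Xe: "X = - (g * z / (2 * \<sigma>\<^sup>2))" unfolding X_def using sne by simp
  have X2: "X\<^sup>2 = g * (g * z\<^sup>2) / (4 * \<sigma>\<^sup>2 * \<sigma>\<^sup>2)"
    unfolding Xe using sne by (simp add: power2_eq_square field_simps)
  define y where "y = z\<^sup>2 / (4 * \<sigma>\<^sup>2)"
  have y0: "y \<ge> 0" unfolding y_def by simp
  have zy: "z\<^sup>2 = 4 * \<sigma>\<^sup>2 * y" unfolding y_def using sne by simp
  have gy: "g = exp (- y)" unfolding g_def gs_def y_def by simp
  have yy: "y \<le> exp y" using exp_ge_add_one_self[of y] by linarith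
  have "y * exp (-y) = y / exp y" by (simp add: exp_minus field_simps)
  also have "\<dots> \<le> 1" using yy by (simp add: pos_divide_le_eq)
  finally have "y * exp (-y) \<le> 1" .
  then have gz: "g * z\<^sup>2 \<le> 4 * \<sigma>\<^sup>2" unfolding zy gy using sne
    by (simp add: mult.commute mult.left_commute)
  have "X\<^sup>2 \<le> g * (4 * \<sigma>\<^sup>2) / (4 * \<sigma>\<^sup>2 * \<sigma>\<^sup>2)"
    unfolding X2 using gz g0 sne by (intro divide_right_mono mult_left_mono) auto
  also have "\<dots> = g / \<sigma>\<^sup>2" using sne by simp
  finally have Xb: "X\<^sup>2 \<le> g / \<sigma>\<^sup>2" .
  have gb: "g \<le> exp (1/16) * exp (- (\<bar>a\<bar> - \<bar>a - b\<bar>) / (4 * \<sigma>))"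
  proof -
    have "g \<le> exp (1/16) * exp (- \<bar>z\<bar> / (4 * \<sigma>))" unfolding g_def by (rule gauss_exp_bound[OF assms])
    also have "\<dots> \<le> exp (1/16) * exp (- (\<bar>a\<bar> - \<bar>a - b\<bar>) / (4 * \<sigma>))"
    proof -
      have "\<bar>a\<bar> - \<bar>a - b\<bar> \<le> \<bar>z\<bar>" using z by arith
      then have "(\<bar>a\<bar> - \<bar>a - b\<bar>) / (4 * \<sigma>) \<le> \<bar>z\<bar> / (4 * \<sigma>)" using assms by (intro divide_right_mono) auto
      then have "- \<bar>z\<bar> / (4 * \<sigma>) \<le> - (\<bar>a\<bar> - \<bar>a - b\<bar>) / (4 * \<sigma>)" by (simp add: diff_divide_distrib)
      then show ?thesis by simp
    qed
    finally show ?thesis .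
  qed
  have "(gs \<sigma> a - gs \<sigma> b)\<^sup>2 = (a - b)\<^sup>2 * X\<^sup>2" unfolding D by (simp add: power_mult_distrib)
  also have "\<dots> \<le> (a - b)\<^sup>2 * (g / \<sigma>\<^sup>2)" using Xb by (intro mult_left_mono) auto
  also have "\<dots> \<le> (a - b)\<^sup>2 * ((exp (1/16) * exp (- (\<bar>a\<bar> - \<bar>a - b\<bar>) / (4 * \<sigma>))) / \<sigma>\<^sup>2)"
    using gb by (intro mult_left_mono divide_right_mono) auto
  finally show ?thesis by (simp add: field_simps)
qed

lemma tail_bound:
  assumes "\<sigma> \<ge> 1" "\<bar>t\<bar> \<ge> \<sigma>\<^sup>2 / 2"
  shows "(gs \<sigma> t)\<^sup>2 \<le> 16 / \<sigma>\<^sup>2 * exp (- \<bar>t\<bar> / 8)"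
proof -
  have s2: "\<sigma>\<^sup>2 > 0" using assms by simp
  have "t\<^sup>2 = \<bar>t\<bar> * \<bar>t\<bar>" by (simp add: power2_eq_square)
  also have "\<dots> \<ge> \<bar>t\<bar> * (\<sigma>\<^sup>2 / 2)" using assms by (intro mult_left_mono) auto
  finally have "t\<^sup>2 / (2 * \<sigma>\<^sup>2) \<ge> \<bar>t\<bar> / 4" using s2 by (simp add: field_simps)
  then have A: "(gs \<sigma> t)\<^sup>2 \<le> exp (- \<bar>t\<bar> / 4)" unfolding gs_sq by simp
  have B: "exp (- \<bar>t\<bar> / 4) = exp (- \<bar>t\<bar> / 8) * exp (- \<bar>t\<bar> / 8)" by (simp flip: exp_add)
  have C: "exp (- \<bar>t\<bar> / 8) \<le> exp (- \<sigma>\<^sup>2 / 16)" using assms by simp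
  have D: "exp (- \<sigma>\<^sup>2 / 16) \<le> 16 / \<sigma>\<^sup>2"
  proof -
    have "1 + \<sigma>\<^sup>2/16 \<le> exp (\<sigma>\<^sup>2/16)" by (rule exp_ge_add_one_self)
    then have "\<sigma>\<^sup>2/16 \<le> exp (\<sigma>\<^sup>2/16)" by linarith
    then show ?thesis using s2 by (simp add: exp_minus field_simps)
  qed
  have "exp (- \<bar>t\<bar> / 8) * exp (- \<bar>t\<bar> / 8) \<le> 16 / \<sigma>\<^sup>2 * exp (- \<bar>t\<bar> / 8)"
    using order.trans[OF C D] by (intro mult_right_mono) auto
  then show ?thesis using A B by linarith
qed


lemma gw_eq: "gauss_weight N \<sigma> d = (if even (int N + d) \<and> real_of_int \<bar>d\<bar> \<le> \<sigma>\<^sup>2 then gs \<sigma> (real_of_int d) else 0)"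
  unfolding gauss_weight_def gs_def by simp

lemma gw_nonneg: "gauss_weight N \<sigma> d \<ge> 0"
  unfolding gauss_weight_def by simp

lemma gw_out: "\<not> real_of_int \<bar>d\<bar> \<le> \<sigma>\<^sup>2 \<Longrightarrow> gauss_weight N \<sigma> d = 0"
  unfolding gauss_weight_def by simp

lemma gw_sym: "gauss_weight N \<sigma> (- d) = gauss_weight N \<sigma> d"
proof -
  have "even (int N + - d) = even (int N + d)"
    by (metis add.commute diff_conv_add_uminus even_add even_minus)
  then show ?thesis unfolding gauss_weight_def by simp
qed

lemma coef_sym: "coef N \<sigma> (- d) = coef N \<sigma> d"
  unfolding coef_def by (simp add: gw_sym)

lemma coef_out: "\<not> real_of_int \<bar>d\<bar> \<le> \<sigma>\<^sup>2 \<Longrightarrow> coef N \<sigma> d = 0"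
  unfolding coef_def by (simp add: gw_out)

abbreviation AA :: "real \<Rightarrow> int set" where
  "AA \<sigma> \<equiv> {d::int. real_of_int \<bar>d\<bar> \<le> \<sigma>\<^sup>2}"

lemma Z_sq: "(norm_const N \<sigma>)\<^sup>2 = (\<Sum>d\<in>AA \<sigma>. (gauss_weight N \<sigma> d)\<^sup>2)"
  unfolding norm_const_def by (simp add: sum_nonneg)

lemma Z_low:
  assumes "\<sigma> \<ge> 1"
  shows "(\<Sum>d\<in>AA \<sigma>. (gauss_weight N \<sigma> d)\<^sup>2) \<ge> \<sigma> / (3 * exp (1/2))"
proof -
  define p :: int where "p = (if even N then 0 else 1)"
  define J where "J = nat \<lfloor>(\<sigma> + 1) / 2\<rfloor>"
  define f where "f = (\<lambda>j::nat. p + 2 * int j)"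
  have p01: "0 \<le> p" "p \<le> 1" unfolding p_def by auto
  have evp: "even (int N + p)" unfolding p_def by auto
  have fl1: "\<lfloor>(\<sigma> + 1) / 2\<rfloor> \<ge> 1" using assms by (simp add: le_floor_iff)
  have Jr: "real J = of_int \<lfloor>(\<sigma> + 1) / 2\<rfloor>" unfolding J_def using fl1 by simp
  have J1: "real J \<le> (\<sigma> + 1) / 2" unfolding Jr by (rule of_int_floor_le)
  have J2: "real J \<ge> 1" "real J \<ge> (\<sigma> + 1)/2 - 1" unfolding Jr using fl1 by linarith+
  have inj: "inj_on f {..<J}" unfolding f_def by (auto simp: inj_on_def)
  have mem: "f j \<in> AA \<sigma> \<and> (gauss_weight N \<sigma> (f j))\<^sup>2 \<ge> exp (- 1/2)" if "j < J" for j
  proof -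
    have "real j + 1 \<le> real J" using that by simp
    then have fj: "0 \<le> real_of_int (f j)" "real_of_int (f j) \<le> \<sigma>"
      unfolding f_def using p01 J1 by (auto simp: of_int_le_iff[symmetric])
    have s2: "\<sigma> \<le> \<sigma>\<^sup>2" using assms by (simp add: power2_eq_square)
    have inA: "real_of_int \<bar>f j\<bar> \<le> \<sigma>\<^sup>2" using fj s2 by simp
    have ev: "even (int N + f j)" unfolding f_def using evp by simp
    have sq: "(real_of_int (f j))\<^sup>2 \<le> \<sigma>\<^sup>2" using fj by (intro power_mono) auto
    have "(gauss_weight N \<sigma> (f j))\<^sup>2 = exp (- (real_of_int (f j))\<^sup>2 / (2 * \<sigma>\<^sup>2))"
      using inA ev by (simp add: gw_eq gs_sq)
    also have "\<dots> \<ge> exp (- 1/2)" using sq assms by (simp add: field_simps)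
    finally show ?thesis using inA by simp
  qed
  have "real J * exp (- 1/2) = (\<Sum>j<J. exp (- 1/2))" by simp
  also have "\<dots> \<le> (\<Sum>j<J. (gauss_weight N \<sigma> (f j))\<^sup>2)" using mem by (intro sum_mono) auto
  also have "\<dots> = (\<Sum>d\<in>f ` {..<J}. (gauss_weight N \<sigma> d)\<^sup>2)" using inj by (simp add: sum.reindex)
  also have "\<dots> \<le> (\<Sum>d\<in>AA \<sigma>. (gauss_weight N \<sigma> d)\<^sup>2)"
    using mem by (intro sum_mono2 fin_abs_le) auto
  finally have A: "real J * exp (- 1/2) \<le> (\<Sum>d\<in>AA \<sigma>. (gauss_weight N \<sigma> d)\<^sup>2)" .
  have "\<sigma> - 1 \<le> 2 * real J" using J2(2) by (simp add: field_simps)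
  then have "\<sigma> \<le> 3 * real J" using J2(1) by (cases "\<sigma> \<le> 3") linarith+
  then have "\<sigma> / (3 * exp (1/2)) \<le> real J * exp (- 1/2)" by (simp add: exp_minus field_simps)
  then show ?thesis using A by linarith
qed

lemma Z_pos: "\<sigma> \<ge> 1 \<Longrightarrow> (norm_const N \<sigma>)\<^sup>2 > 0"
  using Z_low[of \<sigma> N] by (simp add: Z_sq) (smt (verit) divide_pos_pos exp_gt_zero)

lemma coef_norm:
  assumes "\<sigma> \<ge> 1" "finite U" "AA \<sigma> \<subseteq> U"
  shows "(\<Sum>d\<in>U. (coef N \<sigma> d)\<^sup>2) = 1"
proof -
  have "(\<Sum>d\<in>U. (coef N \<sigma> d)\<^sup>2) = (\<Sum>d\<in>AA \<sigma>. (coef N \<sigma> d)\<^sup>2)"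
    using assms by (intro sum.mono_neutral_right) (auto simp: coef_out)
  also have "\<dots> = (\<Sum>d\<in>AA \<sigma>. (gauss_weight N \<sigma> d)\<^sup>2) / (norm_const N \<sigma>)\<^sup>2"
    unfolding coef_def by (simp add: power_divide sum_divide_distrib)
  also have "\<dots> = 1" using Z_pos[OF assms(1), of N] by (simp add: Z_sq)
  finally show ?thesis .
qed


lemma set_eqA: "{d::int. - (\<sigma>\<^sup>2) \<le> real_of_int d \<and> real_of_int d \<le> \<sigma>\<^sup>2} = AA \<sigma>"
  by (auto simp: abs_le_iff)

lemma odd_moment:
  "(\<Sum>d\<in>AA \<sigma>. (real_of_int d) ^ (2 * n + 1) * (coef N \<sigma> d)\<^sup>2) = 0"
proof -
  let ?g = "\<lambda>d::int. (real_of_int d) ^ (2 * n + 1) * (coef N \<sigma> d)\<^sup>2"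
  have "(\<Sum>d\<in>AA \<sigma>. ?g d) = (\<Sum>d\<in>AA \<sigma>. ?g (- d))"
    by (rule sum.reindex_bij_witness[of _ uminus uminus]) auto
  also have "\<dots> = - (\<Sum>d\<in>AA \<sigma>. ?g d)"
    by (simp add: coef_sym sum_negf[symmetric])
  finally show ?thesis by simp
qed

lemma even_moment:
  assumes "\<sigma> \<ge> 1"
  shows "(\<Sum>d\<in>AA \<sigma>. (real_of_int d) ^ (2 * n) * (coef N \<sigma> d)\<^sup>2) \<le> 30 * exp 1 * (4 * real n) ^ n * \<sigma> ^ (2 * n)"
proof -
  have sp: "\<sigma> > 0" using assms by simp
  define M where "M = (4 * real n) ^ n * \<sigma> ^ (2 * n) * exp (1/16)"
  have M0: "M \<ge> 0" unfolding M_def by simp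
  have pt: "(real_of_int d) ^ (2 * n) * (gauss_weight N \<sigma> d)\<^sup>2 \<le> M * exp (- (1 / (4 * \<sigma>)) * real_of_int \<bar>d\<bar>)" for d
  proof -
    let ?x = "real_of_int d"
    have x0: "?x ^ (2*n) \<ge> 0" by (simp add: power_mult)
    have "(gauss_weight N \<sigma> d)\<^sup>2 \<le> (gs \<sigma> ?x)\<^sup>2" by (simp add: gw_eq)
    then have "?x ^ (2*n) * (gauss_weight N \<sigma> d)\<^sup>2 \<le> (?x ^ (2*n) * gs \<sigma> ?x) * gs \<sigma> ?x"
      using x0 by (simp add: power2_eq_square mult.assoc mult_left_mono)
    also have "\<dots> \<le> ((4 * real n) ^ n * \<sigma> ^ (2*n)) * gs \<sigma> ?x"
      using moment_pt[OF sp] gs_pos[of \<sigma> ?x] by (intro mult_right_mono) auto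
    also have "\<dots> \<le> ((4 * real n) ^ n * \<sigma> ^ (2*n)) * (exp (1/16) * exp (- \<bar>?x\<bar> / (4 * \<sigma>)))"
      using gauss_exp_bound[OF sp] by (intro mult_left_mono) auto
    also have "\<dots> = M * exp (- (1 / (4 * \<sigma>)) * real_of_int \<bar>d\<bar>)" unfolding M_def by simp
    finally show ?thesis .
  qed
  have "(\<Sum>d\<in>AA \<sigma>. (real_of_int d) ^ (2 * n) * (gauss_weight N \<sigma> d)\<^sup>2) \<le> (\<Sum>d\<in>AA \<sigma>. M * exp (- (1 / (4 * \<sigma>)) * real_of_int \<bar>d\<bar>))"
    by (intro sum_mono pt)
  also have "\<dots> = M * (\<Sum>d\<in>AA \<sigma>. exp (- (1 / (4 * \<sigma>)) * real_of_int \<bar>d\<bar>))" by (simp add: sum_distrib_left)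
  also have "\<dots> \<le> M * (2 * (1 + 1 / (1 / (4 * \<sigma>))))"
    using geom_bound[OF fin_abs_le, of "1 / (4 * \<sigma>)"] sp M0 by (intro mult_left_mono) auto
  also have "\<dots> \<le> M * (10 * \<sigma>)" using assms M0 by (intro mult_left_mono) auto
  finally have num: "(\<Sum>d\<in>AA \<sigma>. (real_of_int d) ^ (2 * n) * (gauss_weight N \<sigma> d)\<^sup>2) \<le> M * (10 * \<sigma>)" .
  define Z2 where "Z2 = (\<Sum>d\<in>AA \<sigma>. (gauss_weight N \<sigma> d)\<^sup>2)"
  have Zl: "Z2 \<ge> \<sigma> / (3 * exp (1/2))" unfolding Z2_def by (rule Z_low[OF assms])
  have Zp: "Z2 > 0" using Zl sp by (smt (verit) divide_pos_pos exp_gt_zero)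
  have "(\<Sum>d\<in>AA \<sigma>. (real_of_int d) ^ (2 * n) * (coef N \<sigma> d)\<^sup>2)
      = (\<Sum>d\<in>AA \<sigma>. (real_of_int d) ^ (2 * n) * (gauss_weight N \<sigma> d)\<^sup>2) / Z2"
    unfolding coef_def using Z_sq[of N \<sigma>] unfolding Z2_def[symmetric]
    by (simp add: power_divide sum_divide_distrib mult.assoc)
  also have "\<dots> \<le> M * (10 * \<sigma>) / Z2" using num Zp by (intro divide_right_mono) auto
  also have "\<dots> \<le> M * (10 * \<sigma>) / (\<sigma> / (3 * exp (1/2)))"
    using Zl Zp sp M0 by (intro divide_left_mono) auto
  also have "\<dots> = 30 * exp (1/2) * M" using sp by (simp add: field_simps)
  also have "\<dots> = 30 * (exp (1/2) * exp (1/16)) * ((4 * real n) ^ n * \<sigma> ^ (2 * n))"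
    unfolding M_def by (simp add: algebra_simps)
  also have "\<dots> \<le> 30 * exp 1 * ((4 * real n) ^ n * \<sigma> ^ (2 * n))"
  proof -
    have "exp (1/2) * exp (1/16) \<le> exp (1::real)" by (simp flip: exp_add)
    then show ?thesis by (intro mult_right_mono) auto
  qed
  finally show ?thesis by (simp add: mult.assoc)
qed


definition KK :: "int \<Rightarrow> real" where
  "KK \<kappa> = (real_of_int \<kappa>)\<^sup>2 * exp (1/16 + \<bar>real_of_int \<kappa>\<bar> / 4) + 16 * exp (\<bar>real_of_int \<kappa>\<bar> / 8)"

lemma pt2:
  assumes s1: "\<sigma> \<ge> 1" and ev: "even \<kappa>" and big: "2 * \<bar>real_of_int \<kappa>\<bar> \<le> \<sigma>\<^sup>2"
  shows "(gauss_weight N \<sigma> d - gauss_weight N \<sigma> (d + \<kappa>))\<^sup>2 \<le> KK \<kappa> / \<sigma>\<^sup>2 * exp (- (1 / (8 * \<sigma>)) * real_of_int \<bar>d\<bar>)"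
proof -
  have sp: "\<sigma> > 0" using s1 by simp
  define x where "x = real_of_int d"
  define k where "k = real_of_int \<kappa>"
  define E where "E = exp (- (1 / (8 * \<sigma>)) * real_of_int \<bar>d\<bar>)"
  have Ep: "E > 0" unfolding E_def by simp
  have s2p: "\<sigma>\<^sup>2 > 0" using sp by simp
  have K1: "k\<^sup>2 * exp (1/16 + \<bar>k\<bar> / 4) \<le> KK \<kappa>" unfolding KK_def k_def by simp
  have K2: "16 * exp (\<bar>k\<bar> / 8) \<le> KK \<kappa>" unfolding KK_def k_def by simp
  have par: "even (int N + (d + \<kappa>)) = even (int N + d)" using ev by simp
  have Eb: "exp (- \<bar>x\<bar> / 8) \<le> E"
  proof -
    have "\<bar>x\<bar> / (8 * \<sigma>) \<le> \<bar>x\<bar> / 8" using s1 by (intro divide_left_mono) auto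
    then show ?thesis unfolding E_def x_def by simp
  qed
  have tail2: "(gs \<sigma> t)\<^sup>2 \<le> 16 / \<sigma>\<^sup>2 * exp (\<bar>k\<bar> / 8) * E" if "\<bar>t\<bar> \<ge> \<sigma>\<^sup>2 / 2" "\<bar>t - x\<bar> \<le> \<bar>k\<bar>" for t
  proof -
    have A: "(gs \<sigma> t)\<^sup>2 \<le> 16 / \<sigma>\<^sup>2 * exp (- \<bar>t\<bar> / 8)" by (rule tail_bound[OF s1 that(1)])
    have "exp (- \<bar>t\<bar> / 8) \<le> exp (\<bar>k\<bar> / 8) * exp (- \<bar>x\<bar> / 8)"
      using that(2) by (simp flip: exp_add)
    also have "\<dots> \<le> exp (\<bar>k\<bar> / 8) * E" using Eb by simp
    finally have B: "16 / \<sigma>\<^sup>2 * exp (- \<bar>t\<bar> / 8) \<le> 16 / \<sigma>\<^sup>2 * (exp (\<bar>k\<bar> / 8) * E)"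
      using s2p by (intro mult_left_mono) auto
    show ?thesis using A B by (simp add: mult.assoc)
  qed
  show ?thesis
  proof (cases "even (int N + d)")
    case False
    then have "gauss_weight N \<sigma> d = 0" "gauss_weight N \<sigma> (d + \<kappa>) = 0"
      using par by (auto simp: gauss_weight_def)
    then show ?thesis using Ep s2p KK_def by simp
  next
    case evd: True
    show ?thesis
    proof (cases "real_of_int \<bar>d\<bar> \<le> \<sigma>\<^sup>2")
      case inA: True
      show ?thesis
      proof (cases "real_of_int \<bar>d + \<kappa>\<bar> \<le> \<sigma>\<^sup>2")
        case True
        have "(gauss_weight N \<sigma> d - gauss_weight N \<sigma> (d + \<kappa>))\<^sup>2 = (gs \<sigma> x - gs \<sigma> (x + k))\<^sup>2"
          using evd par inA True by (simp add: gw_eq x_def k_def)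
        also have "\<dots> \<le> (x - (x + k))\<^sup>2 / \<sigma>\<^sup>2 * exp (1/16) * exp (- (\<bar>x\<bar> - \<bar>x - (x + k)\<bar>) / (4 * \<sigma>))"
          by (rule mvt_bound[OF sp])
        also have "\<dots> = k\<^sup>2 / \<sigma>\<^sup>2 * exp (1/16) * exp (- \<bar>x\<bar> / (4 * \<sigma>) + \<bar>k\<bar> / (4 * \<sigma>))"
          by (simp add: diff_divide_distrib)
        also have "\<dots> \<le> k\<^sup>2 / \<sigma>\<^sup>2 * exp (1/16) * exp (\<bar>k\<bar> / 4 + - (1 / (8 * \<sigma>)) * real_of_int \<bar>d\<bar>)"
        proof -
          have a: "\<bar>k\<bar> / (4 * \<sigma>) \<le> \<bar>k\<bar> / 4" using s1 by (intro divide_left_mono) auto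
          have b: "\<bar>x\<bar> / (8 * \<sigma>) \<le> \<bar>x\<bar> / (4 * \<sigma>)" using sp by (intro divide_left_mono) auto
          have "- \<bar>x\<bar> / (4 * \<sigma>) + \<bar>k\<bar> / (4 * \<sigma>) \<le> \<bar>k\<bar> / 4 + - (1 / (8 * \<sigma>)) * real_of_int \<bar>d\<bar>"
            using a b unfolding x_def by simp
          then show ?thesis by (intro mult_left_mono) auto
        qed
        also have "\<dots> = k\<^sup>2 * exp (1/16 + \<bar>k\<bar> / 4) / \<sigma>\<^sup>2 * E"
          unfolding E_def exp_add by (simp add: field_simps)
        also have "\<dots> \<le> KK \<kappa> / \<sigma>\<^sup>2 * E"
          using K1 s2p Ep by (intro mult_right_mono divide_right_mono) auto
        finally show ?thesis unfolding E_def .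
      next
        case False
        then have "\<bar>x + k\<bar> > \<sigma>\<^sup>2" unfolding x_def k_def by simp
        then have t: "\<bar>x\<bar> \<ge> \<sigma>\<^sup>2 / 2" using big unfolding k_def by linarith
        have "(gauss_weight N \<sigma> d - gauss_weight N \<sigma> (d + \<kappa>))\<^sup>2 = (gs \<sigma> x)\<^sup>2"
          using evd inA False by (simp add: gw_eq x_def)
        also have "\<dots> \<le> 16 / \<sigma>\<^sup>2 * exp (\<bar>k\<bar> / 8) * E" by (rule tail2[OF t]) simp
        also have "\<dots> \<le> KK \<kappa> / \<sigma>\<^sup>2 * E"
          using K2 s2p Ep by (simp add: divide_right_mono mult_right_mono)
        finally show ?thesis unfolding E_def .
      qed
    next
      case outA: False
      show ?thesis
      proof (cases "real_of_int \<bar>d + \<kappa>\<bar> \<le> \<sigma>\<^sup>2")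
        case True
        have "\<bar>x\<bar> > \<sigma>\<^sup>2" using outA unfolding x_def by simp
        then have t: "\<bar>x + k\<bar> \<ge> \<sigma>\<^sup>2 / 2" using big unfolding k_def by linarith
        have "(gauss_weight N \<sigma> d - gauss_weight N \<sigma> (d + \<kappa>))\<^sup>2 = (gs \<sigma> (x + k))\<^sup>2"
          using evd par outA True by (simp add: gw_eq x_def k_def)
        also have "\<dots> \<le> 16 / \<sigma>\<^sup>2 * exp (\<bar>k\<bar> / 8) * E" by (rule tail2[OF t]) simp
        also have "\<dots> \<le> KK \<kappa> / \<sigma>\<^sup>2 * E"
          using K2 s2p Ep by (simp add: divide_right_mono mult_right_mono)
        finally show ?thesis unfolding E_def .
      next
        case False
        then have "gauss_weight N \<sigma> d = 0" "gauss_weight N \<sigma> (d + \<kappa>) = 0"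
          using outA by (auto simp: gw_out)
        then show ?thesis using Ep s2p KK_def by (simp add: E_def)
      qed
    qed
  qed
qed


lemma part2:
  assumes s1: "\<sigma> \<ge> 1" and ev: "even \<kappa>"
  shows "\<bar>(\<Sum>d\<in>{d::int. - (\<sigma>\<^sup>2) \<le> real_of_int d \<and> real_of_int d \<le> \<sigma>\<^sup>2 - real_of_int \<kappa>}.
                  coef N \<sigma> d * coef N \<sigma> (d + \<kappa>)) - 1\<bar>
         \<le> (4 * \<bar>real_of_int \<kappa>\<bar> + 27 * exp 1 * KK \<kappa>) / \<sigma>\<^sup>2"
proof -
  let ?c = "coef N \<sigma>"
  let ?B = "{d::int. - (\<sigma>\<^sup>2) \<le> real_of_int d \<and> real_of_int d \<le> \<sigma>\<^sup>2 - real_of_int \<kappa>}"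
  define T where "T = {d::int. real_of_int \<bar>d\<bar> \<le> \<sigma>\<^sup>2 + \<bar>real_of_int \<kappa>\<bar>}"
  define S where "S = (\<Sum>d\<in>?B. ?c d * ?c (d + \<kappa>))"
  have sp: "\<sigma> > 0" using s1 by simp
  have s2p: "\<sigma>\<^sup>2 > 0" using sp by simp
  have finT: "finite T" unfolding T_def by (rule fin_abs_le)
  have AT: "AA \<sigma> \<subseteq> T" unfolding T_def by auto
  have BT: "?B \<subseteq> T" unfolding T_def by auto
  have ST: "S = (\<Sum>d\<in>T. ?c d * ?c (d + \<kappa>))"
    unfolding S_def
  proof (rule sum.mono_neutral_left[OF finT BT], rule ballI)
    fix d assume "d \<in> T - ?B"
    then have "real_of_int d < - (\<sigma>\<^sup>2) \<or> real_of_int d > \<sigma>\<^sup>2 - real_of_int \<kappa>" by auto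
    then have "?c d = 0 \<or> ?c (d + \<kappa>) = 0" by (auto intro!: coef_out)
    then show "?c d * ?c (d + \<kappa>) = 0" by auto
  qed
  have h1: "(\<Sum>d\<in>T. (?c d)\<^sup>2) = 1" by (rule coef_norm[OF s1 finT AT])
  have h2: "(\<Sum>d\<in>T. (?c (d + \<kappa>))\<^sup>2) = 1"
  proof -
    have inj: "inj_on (\<lambda>d. d + \<kappa>) T" by (auto simp: inj_on_def)
    have "(\<Sum>d\<in>T. (?c (d + \<kappa>))\<^sup>2) = (\<Sum>e\<in>(\<lambda>d. d + \<kappa>) ` T. (?c e)\<^sup>2)"
      using sum.reindex[OF inj, of "\<lambda>e. (?c e)\<^sup>2"] by simp
    also have "\<dots> = 1"
    proof (rule coef_norm[OF s1])
      show "finite ((\<lambda>d. d + \<kappa>) ` T)" using finT by simp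
      show "AA \<sigma> \<subseteq> (\<lambda>d. d + \<kappa>) ` T"
      proof
        fix e assume e: "e \<in> AA \<sigma>"
        have "e - \<kappa> \<in> T" using e unfolding T_def by auto
        then show "e \<in> (\<lambda>d. d + \<kappa>) ` T" by (intro image_eqI[of _ _ "e - \<kappa>"]) auto
      qed
    qed
    finally show ?thesis .
  qed
  have h3: "(\<Sum>d\<in>T. (?c d - ?c (d + \<kappa>))\<^sup>2) = 2 - 2 * S"
  proof -
    have "(\<Sum>d\<in>T. (?c d - ?c (d + \<kappa>))\<^sup>2) = (\<Sum>d\<in>T. (?c d)\<^sup>2 + (?c (d + \<kappa>))\<^sup>2 - 2 * (?c d * ?c (d + \<kappa>)))"
      by (intro sum.cong refl) (simp add: power2_diff)
    also have "\<dots> = (\<Sum>d\<in>T. (?c d)\<^sup>2) + (\<Sum>d\<in>T. (?c (d + \<kappa>))\<^sup>2) - 2 * (\<Sum>d\<in>T. ?c d * ?c (d + \<kappa>))"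
      by (simp add: sum.distrib sum_subtractf sum_distrib_left)
    finally show ?thesis using h1 h2 ST by simp
  qed
  have h4: "(\<Sum>d\<in>T. (?c d - ?c (d + \<kappa>))\<^sup>2) \<le> 4"
  proof -
    have "(\<Sum>d\<in>T. (?c d - ?c (d + \<kappa>))\<^sup>2) \<le> (\<Sum>d\<in>T. 2 * (?c d)\<^sup>2 + 2 * (?c (d + \<kappa>))\<^sup>2)"
    proof (rule sum_mono)
      fix d
      have "0 \<le> (?c d + ?c (d + \<kappa>))\<^sup>2" by simp
      then show "(?c d - ?c (d + \<kappa>))\<^sup>2 \<le> 2 * (?c d)\<^sup>2 + 2 * (?c (d + \<kappa>))\<^sup>2"
        by (simp add: power2_diff power2_sum)
    qed
    also have "\<dots> = 4" using h1 h2 by (simp add: sum.distrib sum_distrib_left[symmetric])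
    finally show ?thesis .
  qed
  have sq0: "(\<Sum>d\<in>T. (?c d - ?c (d + \<kappa>))\<^sup>2) \<ge> 0" by (intro sum_nonneg) simp
  have absS: "\<bar>S - 1\<bar> = (\<Sum>d\<in>T. (?c d - ?c (d + \<kappa>))\<^sup>2) / 2" using h3 sq0 by simp
  have KK0: "KK \<kappa> \<ge> 0" unfolding KK_def by simp
  have "\<bar>S - 1\<bar> \<le> (4 * \<bar>real_of_int \<kappa>\<bar> + 27 * exp 1 * KK \<kappa>) / \<sigma>\<^sup>2"
  proof (cases "2 * \<bar>real_of_int \<kappa>\<bar> \<le> \<sigma>\<^sup>2")
    case False
    have "\<bar>S - 1\<bar> \<le> 2" using absS h4 by simp
    also have "2 \<le> 4 * \<bar>real_of_int \<kappa>\<bar> / \<sigma>\<^sup>2" using False s2p by (simp add: field_simps)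
    also have "\<dots> \<le> (4 * \<bar>real_of_int \<kappa>\<bar> + 27 * exp 1 * KK \<kappa>) / \<sigma>\<^sup>2"
      using KK0 s2p by (intro divide_right_mono) auto
    finally show ?thesis .
  next
    case big: True
    define Z2 where "Z2 = (\<Sum>d\<in>AA \<sigma>. (gauss_weight N \<sigma> d)\<^sup>2)"
    have Zl: "Z2 \<ge> \<sigma> / (3 * exp (1/2))" unfolding Z2_def by (rule Z_low[OF s1])
    have Zp: "Z2 > 0" using Zl sp by (smt (verit) divide_pos_pos exp_gt_zero)
    have Zeq: "(norm_const N \<sigma>)\<^sup>2 = Z2" unfolding Z2_def by (rule Z_sq)
    have cw: "(?c d - ?c (d + \<kappa>))\<^sup>2 = (gauss_weight N \<sigma> d - gauss_weight N \<sigma> (d + \<kappa>))\<^sup>2 / Z2" for d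
      unfolding coef_def Zeq[symmetric] by (simp add: diff_divide_distrib[symmetric] power_divide)
    have "(\<Sum>d\<in>T. (gauss_weight N \<sigma> d - gauss_weight N \<sigma> (d + \<kappa>))\<^sup>2)
        \<le> (\<Sum>d\<in>T. KK \<kappa> / \<sigma>\<^sup>2 * exp (- (1 / (8 * \<sigma>)) * real_of_int \<bar>d\<bar>))"
      by (intro sum_mono pt2[OF s1 ev big])
    also have "\<dots> = KK \<kappa> / \<sigma>\<^sup>2 * (\<Sum>d\<in>T. exp (- (1 / (8 * \<sigma>)) * real_of_int \<bar>d\<bar>))"
      by (simp add: sum_distrib_left)
    also have "\<dots> \<le> KK \<kappa> / \<sigma>\<^sup>2 * (2 * (1 + 1 / (1 / (8 * \<sigma>))))"
      using geom_bound[OF finT, of "1 / (8 * \<sigma>)"] sp KK0 by (intro mult_left_mono) auto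
    also have "\<dots> \<le> KK \<kappa> / \<sigma>\<^sup>2 * (18 * \<sigma>)"
      using s1 KK0 by (intro mult_left_mono) auto
    finally have num: "(\<Sum>d\<in>T. (gauss_weight N \<sigma> d - gauss_weight N \<sigma> (d + \<kappa>))\<^sup>2) \<le> KK \<kappa> / \<sigma>\<^sup>2 * (18 * \<sigma>)" .
    have "\<bar>S - 1\<bar> = (\<Sum>d\<in>T. (gauss_weight N \<sigma> d - gauss_weight N \<sigma> (d + \<kappa>))\<^sup>2) / Z2 / 2"
      unfolding absS cw by (simp add: sum_divide_distrib)
    also have "\<dots> \<le> KK \<kappa> / \<sigma>\<^sup>2 * (18 * \<sigma>) / Z2 / 2"
      using num Zp by (intro divide_right_mono) auto
    also have "\<dots> \<le> KK \<kappa> / \<sigma>\<^sup>2 * (18 * \<sigma>) / (\<sigma> / (3 * exp (1/2))) / 2"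
      using Zl Zp sp KK0 s2p by (intro divide_right_mono divide_left_mono) auto
    also have "\<dots> = 27 * exp (1/2) * KK \<kappa> / \<sigma>\<^sup>2" using sp by (simp add: field_simps)
    also have "\<dots> \<le> 27 * exp 1 * KK \<kappa> / \<sigma>\<^sup>2"
      using KK0 s2p by (intro divide_right_mono mult_right_mono) auto
    also have "\<dots> \<le> (4 * \<bar>real_of_int \<kappa>\<bar> + 27 * exp 1 * KK \<kappa>) / \<sigma>\<^sup>2"
      using s2p by (intro divide_right_mono) auto
    finally show ?thesis .
  qed
  then show ?thesis unfolding S_def .
qed


theorem lemma4p5:
  fixes C :: real
  shows "(\<forall>n::nat. \<exists>Cn::real. \<forall>(N::nat) (\<sigma>::real).
            1 \<le> N \<and> 1 \<le> \<sigma> \<and> \<sigma> \<le> C * sqrt (real N) \<longrightarrow>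
              (\<Sum>d\<in>{d::int. - (\<sigma>\<^sup>2) \<le> real_of_int d \<and> real_of_int d \<le> \<sigma>\<^sup>2}.
                  (real_of_int d) ^ (2 * n) * (coef N \<sigma> d)\<^sup>2) \<le> Cn * \<sigma> ^ (2 * n)
            \<and> (\<Sum>d\<in>{d::int. - (\<sigma>\<^sup>2) \<le> real_of_int d \<and> real_of_int d \<le> \<sigma>\<^sup>2}.
                  (real_of_int d) ^ (2 * n + 1) * (coef N \<sigma> d)\<^sup>2) = 0)
       \<and> (\<forall>\<kappa>::int. even \<kappa> \<longrightarrow> (\<exists>C\<kappa>::real. \<forall>(N::nat) (\<sigma>::real).
            1 \<le> N \<and> 1 \<le> \<sigma> \<and> \<sigma> \<le> C * sqrt (real N) \<longrightarrow>
              \<bar>(\<Sum>d\<in>{d::int. - (\<sigma>\<^sup>2) \<le> real_of_int d \<and> real_of_int d \<le> \<sigma>\<^sup>2 - real_of_int \<kappa>}.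
                  coef N \<sigma> d * coef N \<sigma> (d + \<kappa>)) - 1\<bar> \<le> C\<kappa> / \<sigma>\<^sup>2))"
proof (intro conjI allI impI)
  fix n :: nat
  show "\<exists>Cn::real. \<forall>(N::nat) (\<sigma>::real).
            1 \<le> N \<and> 1 \<le> \<sigma> \<and> \<sigma> \<le> C * sqrt (real N) \<longrightarrow>
              (\<Sum>d\<in>{d::int. - (\<sigma>\<^sup>2) \<le> real_of_int d \<and> real_of_int d \<le> \<sigma>\<^sup>2}.
                  (real_of_int d) ^ (2 * n) * (coef N \<sigma> d)\<^sup>2) \<le> Cn * \<sigma> ^ (2 * n)
            \<and> (\<Sum>d\<in>{d::int. - (\<sigma>\<^sup>2) \<le> real_of_int d \<and> real_of_int d \<le> \<sigma>\<^sup>2}.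
                  (real_of_int d) ^ (2 * n + 1) * (coef N \<sigma> d)\<^sup>2) = 0"
    using even_moment odd_moment unfolding set_eqA
    by (intro exI[of _ "30 * exp 1 * (4 * real n) ^ n"]) auto
next
  fix \<kappa> :: int assume "even \<kappa>"
  then show "\<exists>C\<kappa>::real. \<forall>(N::nat) (\<sigma>::real).
            1 \<le> N \<and> 1 \<le> \<sigma> \<and> \<sigma> \<le> C * sqrt (real N) \<longrightarrow>
              \<bar>(\<Sum>d\<in>{d::int. - (\<sigma>\<^sup>2) \<le> real_of_int d \<and> real_of_int d \<le> \<sigma>\<^sup>2 - real_of_int \<kappa>}.
                  coef N \<sigma> d * coef N \<sigma> (d + \<kappa>)) - 1\<bar> \<le> C\<kappa> / \<sigma>\<^sup>2"
    using part2 by (intro exI[of _ "4 * \<bar>real_of_int \<kappa>\<bar> + 27 * exp 1 * KK \<kappa>"]) blast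
qed

end
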